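(* For every nonnegative integer $n$, $$\sum_{k=0}^{\infty}(-1)^k(4k+1)\,\frac{(-3n)_k\,(-n+\tfrac13)_k\,(\tfrac12)_k}{k!\,(n+\tfrac76)_k\,(3n+\tfrac32)_k}=\left(\frac{3^3}{2^8}\right)^n\frac{(\tfrac56)_n(\tfrac12)_n(\tfrac76)_n^2}{(\tfrac{25}{24})_n(\tfrac{7}{24})_n(\tfrac{13}{24})_n(\tfrac{19}{24})_n}.$$ (The sum is finite, since $(-3n)_k=0$ for $k>3n$.)
   Context: $(a)_j=\Gamma(a+j)/\Gamma(a)=a(a+1)\cdots(a+j-1)$ denotes the rising factorial (Pochhammer symbol), with $(a)_0=1$. *)

theory Defs
  imports "HOL-Analysis.Analysis"
begin

end

theory Submission
  imports Defs
begin


definition PP :: "real \<Rightarrow> real \<Rightarrow> real" where "PP x k = - 8265320 - 2984835 * k + 5502210 * k ^ 2 + 1849995 * k ^ 3 - 1750770 * k ^ 4 - 238140 * k ^ 5 + 158760 * k ^ 6 - 141674764 * x - 35840742 * x * k + 67981872 * x * k ^ 2 + 14700924 * x * k ^ 3 - 14213304 * x * k ^ 4 - 1170288 * x * k ^ 5 + 780192 * x * k ^ 6 - 1060759596 * x ^ 2 - 186177258 * x ^ 2 * k + 360202734 * x ^ 2 * k ^ 2 + 48436056 * x ^ 2 * k ^ 3 - 47580696 * x ^ 2 * k ^ 4 - 2052864 * x ^ 2 * k ^ 5 + 1368576 * x ^ 2 * k ^ 6 - 4577606478 * x ^ 3 - 545020056 * x ^ 3 * k + 1068882264 * x ^ 3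 * k ^ 2 + 84503088 * x ^ 3 * k ^ 3 - 83861568 * x ^ 3 * k ^ 4 - 1539648 * x ^ 3 * k ^ 5 + 1026432 * x ^ 3 * k ^ 6 - 12630619980 * x ^ 4 - 981710604 * x ^ 4 * k + 1942923672 * x ^ 4 * k ^ 2 + 81955152 * x ^ 4 * k ^ 3 - 81780192 * x ^ 4 * k ^ 4 - 419904 * x ^ 4 * k ^ 5 + 279936 * x ^ 4 * k ^ 6 - 23319303840 * x ^ 5 - 1112905008 * x ^ 5 * k + 2215382400 * x ^ 5 * k ^ 2 + 41710464 * x ^ 5 * k ^ 3 - 41710464 * x ^ 5 * k ^ 4 - 29214601128 * x ^ 6 - 774839520 * x ^ 6 * k + 1547509536 * x ^ 6 * k ^ 2 + 8678016 * x ^ 6 * k ^ 3 - 8678016 * x ^ 6 * k ^ 4 - 24553746432 * x ^ 7 - 302750784 * x ^ 7 * k + 605501568 * x ^ 7 * k ^ 2 - 13264067520 * x ^ 8 - 50808384 * x ^ 8 * k + 101616768 * x ^ 8 * k ^ 2 - 4162928256 * x ^ 9 - 576948096 * x ^ 10"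

lemma polyid:
  fixes x k :: real
  shows "((3*x+1)*(3*x+2)^2*(3*x+3))*((24*x+25)*(24*x+7)*(24*x+13)*(24*x+19))*((4*k+1)*(6*x+7)^2*(6*x+3)*(6*x+5))
   - 81*((6*x+5)*(2*x+1)*(6*x+7)^2)*((4*k+1)*(3*x+3-k)*(3*x+2-k)*(3*x+1-k)*(3*x+2-3*k))*((6*x+6*k+7)*(6*x+2*k+3)*(6*x+2*k+5)*(6*x+2*k+7))
   = -6*((k-3*x-3)*(3*k-3*x-2)*(2*k+1))*PP x (k+1) - 3*k*PP x k*((6*x+6*k+7)*(6*x+2*k+7))"
  unfolding PP_def by algebra

lemma cancelc:
  fixes r c a1 a2 a3 a4 p1 D :: real
  assumes "c \<noteq> 0" "D \<noteq> 0" "a1 \<noteq> 0" "a2 \<noteq> 0" "a3 \<noteq> 0" "a4 \<noteq> 0"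
  shows "(-2*r/(c*a1*a2))*(4*c*p1/(442368*D*(a3*a4))) = -8*r*p1/(442368*D*(a1*a2*a3*a4))"
  using assms by (simp add: field_simps)

lemma generic:
  fixes h NA N1 Q N0 D a1 a2 a3 a4 r p0 p1 k :: real
  assumes nz: "D \<noteq> 0" "a1 \<noteq> 0" "a2 \<noteq> 0" "a3 \<noteq> 0" "a4 \<noteq> 0" "k+1 \<noteq> 0"
  and e: "D*NA*N1 - 81*Q*N0*(a1*a2*a3*a4) = -6*r*p1 - 3*k*p0*(a1*a4)"
  shows "NA/331776*(h*N1/(a1*a2*a3*a4)) - 27*Q/110592*(h*N0/D)
    = h*((-2*r/((k+1)*a1*a2))*(4*(k+1)*p1/(442368*D*(a3*a4)))) - h*(4*k*p0/(442368*D*(a2*a3)))"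
proof -
  have nz2: "1 + k \<noteq> 0" using nz(6) by (simp add: add.commute)
  have "NA/331776*(h*N1/(a1*a2*a3*a4)) - 27*Q/110592*(h*N0/D)
     = h*(4*(D*NA*N1 - 81*Q*N0*(a1*a2*a3*a4)))/(3*442368*D*(a1*a2*a3*a4))"
    using nz by (simp add: field_simps)
  also have "\<dots> = h*(4*(-6*r*p1 - 3*k*p0*(a1*a4)))/(3*442368*D*(a1*a2*a3*a4))" using e by simp
  also have "\<dots> = h*(-8*r*p1/(442368*D*(a1*a2*a3*a4))) - h*(4*k*p0/(442368*D*(a2*a3)))"
    using nz by (simp add: field_simps)
  also have "\<dots> = h*((-2*r/((k+1)*a1*a2))*(4*(k+1)*p1/(442368*D*(a3*a4)))) - h*(4*k*p0/(442368*D*(a2*a3)))"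
    using cancelc[OF nz(6) nz(1-5)] by simp
  finally show ?thesis .
qed



lemma psh: "b = (a::real) + 1 \<Longrightarrow> a * pochhammer b k = (a + of_nat k) * pochhammer a k"
  using pochhammer_rec[of a k] pochhammer_rec'[of a k] by simp

definition FF :: "real \<Rightarrow> nat \<Rightarrow> real" where
  "FF x k = (-1) ^ k * (4 * real k + 1) *
            (pochhammer (- 3 * x) k * pochhammer (- x + 1/3) k * pochhammer (1/2) k)
            / (fact k * pochhammer (x + 7/6) k * pochhammer (3 * x + 3/2) k)"

definition HH :: "real \<Rightarrow> nat \<Rightarrow> real" where
  "HH x k = (-1) ^ k * (pochhammer (- 3 * x - 3) k * pochhammer (- x - 2/3) k * pochhammer (1/2) k)
            / (fact k * pochhammer (x + 7/6) k * pochhammer (3 * x + 3/2) k)"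

lemma P1: "((3*x+1)*(3*x+2)*(3*x+3)) * pochhammer (- 3 * x) k
   = ((3*x+3-real k)*(3*x+2-real k)*(3*x+1-real k)) * pochhammer (- 3 * x - 3) k"
proof -
  have a: "(-3*x-3) * pochhammer (-3*x-2) k = (-3*x-3 + real k) * pochhammer (-3*x-3) k"
    by (rule psh) simp
  have b: "(-3*x-2) * pochhammer (-3*x-1) k = (-3*x-2 + real k) * pochhammer (-3*x-2) k"
    by (rule psh) simp
  have c: "(-3*x-1) * pochhammer (- 3 * x) k = (-3*x-1 + real k) * pochhammer (-3*x-1) k"
    by (rule psh) simp
  have "((-3*x-3)*(-3*x-2)*(-3*x-1)) * pochhammer (- 3 * x) k
      = ((-3*x-3 + real k)*(-3*x-2 + real k)*(-3*x-1 + real k)) * pochhammer (-3*x-3) k"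
  proof -
    have "((-3*x-3)*(-3*x-2)*(-3*x-1)) * pochhammer (- 3 * x) k = (-3*x-3)*(-3*x-2)*((-3*x-1) * pochhammer (- 3 * x) k)"
      by (simp only: mult.assoc)
    also have "\<dots> = (-3*x-3)*(-3*x-1 + real k)*((-3*x-2) * pochhammer (-3*x-1) k)" unfolding c by (simp only: mult_ac)
    also have "\<dots> = (-3*x-1 + real k)*(-3*x-2 + real k)*((-3*x-3) * pochhammer (-3*x-2) k)" unfolding b by (simp only: mult_ac)
    also have "\<dots> = ((-3*x-3 + real k)*(-3*x-2 + real k)*(-3*x-1 + real k)) * pochhammer (-3*x-3) k" unfolding a by (simp only: mult_ac)
    finally show ?thesis .
  qed
  moreover have e1: "(-3*x-3)*(-3*x-2)*(-3*x-1) = - ((3*x+1)*(3*x+2)*(3*x+3))" by (simp add: algebra_simps)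
  moreover have e2: "(-3*x-3 + real k)*(-3*x-2 + real k)*(-3*x-1 + real k) = - ((3*x+3-real k)*(3*x+2-real k)*(3*x+1-real k))"
    by (simp add: algebra_simps)
  ultimately show ?thesis by simp
qed

lemma P2: "(3*x+2) * pochhammer (- x + 1/3) k = (3*x+2-3*real k) * pochhammer (- x - 2/3) k"
proof -
  have "(-x-2/3) * pochhammer (- x + 1/3) k = (-x-2/3 + real k) * pochhammer (-x-2/3) k"
    by (rule psh) simp
  then have "(-3) * ((-x-2/3) * pochhammer (- x + 1/3) k) = (-3) * ((-x-2/3 + real k) * pochhammer (-x-2/3) k)" by simp
  moreover have "(-3) * ((-x-2/3) * pochhammer (- x + 1/3) k) = (3*x+2) * pochhammer (- x + 1/3) k" by (simp add: field_simps)
  moreover have "(-3) * ((-x-2/3 + real k) * pochhammer (-x-2/3) k) = (3*x+2-3*real k) * pochhammer (- x - 2/3) k" by (simp add: field_simps)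
  ultimately show ?thesis by simp
qed

lemma P3: "(6*x+7) * pochhammer (x + 1 + 7/6) k = (6*x+6*real k+7) * pochhammer (x + 7/6) k"
proof -
  have "(x+7/6) * pochhammer (x + 1 + 7/6) k = (x+7/6 + real k) * pochhammer (x+7/6) k"
    by (rule psh) simp
  then have "6 * ((x+7/6) * pochhammer (x + 1 + 7/6) k) = 6 * ((x+7/6 + real k) * pochhammer (x+7/6) k)" by simp
  moreover have "6 * ((x+7/6) * pochhammer (x + 1 + 7/6) k) = (6*x+7) * pochhammer (x + 1 + 7/6) k" by (simp add: field_simps)
  moreover have "6 * ((x+7/6 + real k) * pochhammer (x+7/6) k) = (6*x+6*real k+7) * pochhammer (x + 7/6) k" by (simp add: field_simps)
  ultimately show ?thesis by simp
qed

lemma P4: "((6*x+3)*(6*x+5)*(6*x+7)) * pochhammer (3 * (x + 1) + 3/2) k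
   = ((6*x+2*real k+3)*(6*x+2*real k+5)*(6*x+2*real k+7)) * pochhammer (3*x+3/2) k"
proof -
  have a: "(3*x+3/2) * pochhammer (3*x+5/2) k = (3*x+3/2 + real k) * pochhammer (3*x+3/2) k"
    by (rule psh) simp
  have b: "(3*x+5/2) * pochhammer (3*x+7/2) k = (3*x+5/2 + real k) * pochhammer (3*x+5/2) k"
    by (rule psh) simp
  have c: "(3*x+7/2) * pochhammer (3 * (x + 1) + 3/2) k = (3*x+7/2 + real k) * pochhammer (3*x+7/2) k"
    by (rule psh) simp
  have "((3*x+3/2)*(3*x+5/2)*(3*x+7/2)) * pochhammer (3 * (x + 1) + 3/2) k
      = ((3*x+3/2 + real k)*(3*x+5/2 + real k)*(3*x+7/2 + real k)) * pochhammer (3*x+3/2) k"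
  proof -
    have "((3*x+3/2)*(3*x+5/2)*(3*x+7/2)) * pochhammer (3 * (x + 1) + 3/2) k = (3*x+3/2)*(3*x+5/2)*((3*x+7/2) * pochhammer (3 * (x + 1) + 3/2) k)"
      by (simp only: mult.assoc)
    also have "\<dots> = (3*x+3/2)*(3*x+7/2 + real k)*((3*x+5/2) * pochhammer (3*x+7/2) k)" unfolding c by (simp only: mult_ac)
    also have "\<dots> = (3*x+7/2 + real k)*(3*x+5/2 + real k)*((3*x+3/2) * pochhammer (3*x+5/2) k)" unfolding b by (simp only: mult_ac)
    also have "\<dots> = ((3*x+3/2 + real k)*(3*x+5/2 + real k)*(3*x+7/2 + real k)) * pochhammer (3*x+3/2) k" unfolding a by (simp only: mult_ac)
    finally show ?thesis .
  qed
  moreover have "(6*x+3)*(6*x+5)*(6*x+7) = 8*((3*x+3/2)*(3*x+5/2)*(3*x+7/2))" by (simp add: field_simps)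
  moreover have "(6*x+2*real k+3)*(6*x+2*real k+5)*(6*x+2*real k+7) = 8*((3*x+3/2 + real k)*(3*x+5/2 + real k)*(3*x+7/2 + real k))"
    by (simp add: field_simps)
  ultimately show ?thesis by (simp only: mult.assoc)
qed



lemma fact_pos': "fact k \<noteq> (0::real)" by simp

lemma E1:
  fixes x :: real assumes x: "x \<ge> 0"
  shows "FF x k * ((3*x+1)*(3*x+2)^2*(3*x+3)) = HH x k * ((4*real k+1)*(3*x+3-real k)*(3*x+2-real k)*(3*x+1-real k)*(3*x+2-3*real k))"
proof -
  define den where "den = fact k * pochhammer (x + 7/6) k * pochhammer (3 * x + 3/2) k"
  have "FF x k * ((3*x+1)*(3*x+2)^2*(3*x+3)) = (-1) ^ k * (4 * real k + 1) *
     ((((3*x+1)*(3*x+2)*(3*x+3)) * pochhammer (- 3 * x) k) * ((3*x+2) * pochhammer (- x + 1/3) k) * pochhammer (1/2) k) / den"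
    unfolding FF_def den_def by (simp add: power2_eq_square mult_ac)
  also have "\<dots> = (-1) ^ k * (4 * real k + 1) *
     ((((3*x+3-real k)*(3*x+2-real k)*(3*x+1-real k)) * pochhammer (- 3 * x - 3) k) * ((3*x+2-3*real k) * pochhammer (- x - 2/3) k) * pochhammer (1/2) k) / den"
    unfolding P1 P2 ..
  also have "\<dots> = HH x k * ((4*real k+1)*(3*x+3-real k)*(3*x+2-real k)*(3*x+1-real k)*(3*x+2-3*real k))"
    unfolding HH_def den_def by (simp add: mult_ac)
  finally show ?thesis .
qed

lemma E2:
  fixes x :: real assumes x: "x \<ge> 0"
  shows "FF (x+1) k * ((6*x+6*real k+7)*(6*x+2*real k+3)*(6*x+2*real k+5)*(6*x+2*real k+7))
    = HH x k * ((4*real k+1)*(6*x+7)^2*(6*x+3)*(6*x+5))"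
proof -
  have q1: "- 3 * (x+1) = - 3 * x - 3" by simp
  have q2: "- (x+1) + 1/3 = - x - 2/3" by simp
  define u1 where "u1 = pochhammer (x + 1 + 7/6) k"
  define v1 where "v1 = pochhammer (3 * (x + 1) + 3/2) k"
  define u0 where "u0 = pochhammer (x + 7/6) k"
  define v0 where "v0 = pochhammer (3 * x + 3/2) k"
  define num where "num = pochhammer (- 3 * x - 3) k * pochhammer (- x - 2/3) k * pochhammer (1/2) k"
  define A where "A = (6*x+2*real k+3)*(6*x+2*real k+5)*(6*x+2*real k+7)"
  define a1 where "a1 = 6*x+6*real k+7"
  define c2 where "c2 = (6*x+3)*(6*x+5)*(6*x+7)"
  have h3: "(6*x+7) * u1 = a1 * u0" unfolding u1_def u0_def a1_def by (rule P3)
  have h4: "c2 * v1 = A * v0" unfolding c2_def v1_def A_def v0_def by (rule P4)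
  have nz: "u0 \<noteq> 0" "v0 \<noteq> 0" "u1 \<noteq> 0" "v1 \<noteq> 0" "6*x+7 \<noteq> 0" "c2 \<noteq> 0" "a1 \<noteq> 0" "A \<noteq> 0"
    unfolding u0_def v0_def u1_def v1_def c2_def a1_def A_def using x
    by (auto intro!: pochhammer_pos[THEN less_imp_neq, THEN not_sym] mult_pos_pos)
  have FFe: "FF (x+1) k = (-1)^k * (4*real k+1) * num / (fact k * u1 * v1)"
    unfolding FF_def num_def u1_def v1_def q1 q2 by simp
  have HHe: "HH x k = (-1)^k * num / (fact k * u0 * v0)"
    unfolding HH_def num_def u0_def v0_def by simp
  have u1e: "u1 = a1 * u0 / (6*x+7)" using h3 nz by (simp add: field_simps)
  have v1e: "v1 = A * v0 / c2" using h4 nz by (simp add: field_simps)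
  have "FF (x+1) k * (a1 * A) = HH x k * ((4*real k+1)*c2*(6*x+7))"
    unfolding FFe HHe u1e v1e using nz by (simp add: field_simps)
  then show ?thesis unfolding a1_def A_def c2_def by (simp add: power2_eq_square mult_ac)
qed

lemma ratio_gen:
  fixes s pa pb pc A B C c1 c2 c3 f pd pe :: real
  assumes "f \<noteq> 0" "pd \<noteq> 0" "pe \<noteq> 0" "c1 \<noteq> 0" "c2 \<noteq> 0" "c3 \<noteq> 0"
  shows "s*((pa*A)*(pb*B)*(pc*C))/((c1*f)*(pd*c2)*(pe*c3)) * (-1) = (s*(pa*pb*pc)/(f*pd*pe)) * (-(A*B*C)/(c1*c2*c3))"
  using assms by (simp add: field_simps)

lemma cancel_gen: "(Dd::real) \<noteq> 0 \<Longrightarrow> (-N/Dd)*(12*Dd) = -12*N" by simp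

lemma E3:
  fixes x :: real assumes x: "x \<ge> 0"
  shows "HH x (Suc k) * ((real k+1)*(6*x+6*real k+7)*(6*x+2*real k+3))
    = HH x k * (-2*((real k-3*x-3)*(3*real k-3*x-2)*(2*real k+1)))"
proof -
  define pa where "pa = pochhammer (- 3 * x - 3) k"
  define pb where "pb = pochhammer (- x - 2/3) k"
  define pc where "pc = pochhammer (1/2::real) k"
  define pd where "pd = pochhammer (x + 7/6) k"
  define pe where "pe = pochhammer (3 * x + 3/2) k"
  define f where "f = (fact k :: real)"
  define kk where "kk = real k"
  have nz: "pd \<noteq> 0" "pe \<noteq> 0" "f \<noteq> 0" unfolding pd_def pe_def f_def
    using x by (auto intro!: pochhammer_pos[THEN less_imp_neq, THEN not_sym])
  have nz2: "x + 7/6 + kk \<noteq> 0" "3*x+3/2+kk \<noteq> 0" "kk+1 \<noteq> 0" unfolding kk_def using x by linarith+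
  have H0: "HH x k = (-1)^k * (pa*pb*pc)/(f*pd*pe)" unfolding HH_def pa_def pb_def pc_def pd_def pe_def f_def ..
  have H1: "HH x (Suc k) = (-1)^k * ((pa*(- 3 * x - 3 + kk))*(pb*(- x - 2/3 + kk))*(pc*(1/2+kk)))/
      (((kk+1)*f)*(pd*(x + 7/6 + kk))*(pe*(3 * x + 3/2+kk))) * (-1)"
    unfolding HH_def pa_def pb_def pc_def pd_def pe_def f_def kk_def pochhammer_rec' fact_Suc
    by (simp add: mult_ac)
  have R: "HH x (Suc k) = HH x k * (-((- 3*x-3+kk)*(-x-2/3+kk)*(1/2+kk)) / ((kk+1)*(x+7/6+kk)*(3*x+3/2+kk)))"
    unfolding H0 H1 by (rule ratio_gen[OF nz(3) nz(1) nz(2) nz2(3) nz2(1) nz2(2)])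
  have R2: "(-((- 3*x-3+kk)*(-x-2/3+kk)*(1/2+kk)) / ((kk+1)*(x+7/6+kk)*(3*x+3/2+kk))) * ((kk+1)*(6*x+6*kk+7)*(6*x+2*kk+3))
     = -2*((kk-3*x-3)*(3*kk-3*x-2)*(2*kk+1))"
  proof -
    have e: "(kk+1)*(6*x+6*kk+7)*(6*x+2*kk+3) = 12*((kk+1)*(x+7/6+kk)*(3*x+3/2+kk))" by (simp add: algebra_simps)
    have dd: "(kk+1)*(x+7/6+kk)*(3*x+3/2+kk) \<noteq> 0" using nz2 by simp
    have "(-((- 3*x-3+kk)*(-x-2/3+kk)*(1/2+kk)) / ((kk+1)*(x+7/6+kk)*(3*x+3/2+kk))) * ((kk+1)*(6*x+6*kk+7)*(6*x+2*kk+3))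
       = -12*((- 3*x-3+kk)*(-x-2/3+kk)*(1/2+kk))"
      unfolding e by (rule cancel_gen[OF dd])
    also have "\<dots> = -2*((kk-3*x-3)*(3*kk-3*x-2)*(2*kk+1))" by (simp add: field_simps)
    finally show ?thesis .
  qed
  have "HH x (Suc k) * ((kk+1)*(6*x+6*kk+7)*(6*x+2*kk+3)) = HH x k * ((-((- 3*x-3+kk)*(-x-2/3+kk)*(1/2+kk)) / ((kk+1)*(x+7/6+kk)*(3*x+3/2+kk))) * ((kk+1)*(6*x+6*kk+7)*(6*x+2*kk+3)))"
    unfolding R by (rule mult.assoc)
  then show ?thesis unfolding R2 by (simp only: kk_def)
qed



definition GG :: "real \<Rightarrow> nat \<Rightarrow> real" where
  "GG x k = HH x k * (4*real k*PP x (real k)/(442368*((3*x+1)*(3*x+2)^2*(3*x+3))*((6*x+2*real k+3)*(6*x+2*real k+5))))"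

lemma div_gen: "(a::real) \<noteq> 0 \<Longrightarrow> F*a = H \<Longrightarrow> F = H/a"
  by (simp add: eq_divide_eq)

lemma tele:
  fixes x :: real assumes x: "x \<ge> 0"
  shows "((24*x+25)*(24*x+7)*(24*x+13)*(24*x+19))/331776 * FF (x+1) k
     - 27*((6*x+5)*(2*x+1)*(6*x+7)^2)/110592 * FF x k = GG x (Suc k) - GG x k"
proof -
  define kk where "kk = real k"
  define D where "D = (3*x+1)*(3*x+2)^2*(3*x+3)"
  define a1 where "a1 = 6*x+6*kk+7"
  define a2 where "a2 = 6*x+2*kk+3"
  define a3 where "a3 = 6*x+2*kk+5"
  define a4 where "a4 = 6*x+2*kk+7"
  define NA where "NA = (24*x+25)*(24*x+7)*(24*x+13)*(24*x+19)"
  define N1 where "N1 = (4*kk+1)*(6*x+7)^2*(6*x+3)*(6*x+5)"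
  define Q where "Q = (6*x+5)*(2*x+1)*(6*x+7)^2"
  define N0 where "N0 = (4*kk+1)*(3*x+3-kk)*(3*x+2-kk)*(3*x+1-kk)*(3*x+2-3*kk)"
  define r where "r = (kk-3*x-3)*(3*kk-3*x-2)*(2*kk+1)"
  define h where "h = HH x k"
  have k0: "kk \<ge> 0" unfolding kk_def by simp
  have nz: "D \<noteq> 0" "a1 \<noteq> 0" "a2 \<noteq> 0" "a3 \<noteq> 0" "a4 \<noteq> 0" "kk+1 \<noteq> 0"
    unfolding D_def a1_def a2_def a3_def a4_def using x k0 by auto
  have e: "D*NA*N1 - 81*Q*N0*(a1*a2*a3*a4) = -6*r*PP x (kk+1) - 3*kk*PP x kk*(a1*a4)"
    unfolding D_def NA_def N1_def Q_def N0_def a1_def a2_def a3_def a4_def r_def by (rule polyid)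
  have f0: "FF x k = h*N0/D" using E1[OF x, of k] nz(1) unfolding h_def N0_def D_def kk_def
    by (simp add: field_simps)
  have nz4: "a1*a2*a3*a4 \<noteq> 0" using nz by simp
  have f1: "FF (x+1) k = h*N1/(a1*a2*a3*a4)" using nz4 E2[OF x, of k] unfolding h_def N1_def a1_def a2_def a3_def a4_def kk_def
    by (rule div_gen)
  have nz3: "(kk+1)*a1*a2 \<noteq> 0" using nz by simp
  have h1': "HH x (Suc k) = h*(-2*r)/((kk+1)*a1*a2)" using nz3 E3[OF x, of k] unfolding h_def r_def a1_def a2_def kk_def
    by (rule div_gen)
  have h1: "HH x (Suc k) = h*(-2*r/((kk+1)*a1*a2))" using h1' by (simp only: times_divide_eq_right)
  have s1: "real (Suc k) = kk + 1" unfolding kk_def by simp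
  have s2: "6*x+2*(kk+1)+3 = a3" "6*x+2*(kk+1)+5 = a4" unfolding a3_def a4_def by simp_all
  have g1: "GG x (Suc k) = (h*(-2*r/((kk+1)*a1*a2)))*(4*(kk+1)*PP x (kk+1)/(442368*D*(a3*a4)))"
    unfolding GG_def s1 s2 h1 D_def ..
  have g0: "GG x k = h*(4*kk*PP x kk/(442368*D*(a2*a3)))"
    unfolding GG_def h_def D_def a2_def a3_def kk_def ..
  show ?thesis
    unfolding g1 g0 f0 f1 NA_def[symmetric] Q_def[symmetric] mult.assoc[of h]
    by (rule generic[OF nz e])
qed



lemma FF_zero: "3*n < k \<Longrightarrow> FF (real n) k = 0"
proof -
  assume "3*n < k"
  then have "pochhammer (- of_nat (3*n) :: real) k = 0" by (rule pochhammer_of_nat_eq_0_lemma)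
  moreover have "(- of_nat (3*n) :: real) = - 3 * real n" by simp
  ultimately show ?thesis unfolding FF_def by simp
qed

lemma FF_sums: "3*n < K \<Longrightarrow> FF (real n) sums (sum (FF (real n)) {..<K})"
  by (rule sums_finite) (auto intro: FF_zero)

lemma HH_zero: "3*n+3 < k \<Longrightarrow> HH (real n) k = 0"
proof -
  assume "3*n+3 < k"
  then have "pochhammer (- of_nat (3*n+3) :: real) k = 0" by (rule pochhammer_of_nat_eq_0_lemma)
  moreover have "(- of_nat (3*n+3) :: real) = - 3 * real n - 3" by simp
  ultimately show ?thesis unfolding HH_def by simp
qed

definition RR :: "nat \<Rightarrow> real" where
  "RR n = ((3^3 / 2^8) ^ n *
            (pochhammer (5/6) n * pochhammer (1/2) n * (pochhammer (7/6) n)^2)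
            / (pochhammer (25/24) n * pochhammer (7/24) n * pochhammer (13/24) n * pochhammer (19/24) n))"

lemma rr_gen:
  fixes cc tt p1 p2 p3 q1 q2 q3 q4 aa bb dd ee ff gg hh :: real
  assumes "q1 \<noteq> 0" "q2 \<noteq> 0" "q3 \<noteq> 0" "q4 \<noteq> 0" "ee \<noteq> 0" "ff \<noteq> 0" "gg \<noteq> 0" "hh \<noteq> 0"
  shows "(cc*tt)*((p1*aa)*(p2*bb)*(p3*dd)^2)/((q1*ee)*(q2*ff)*(q3*gg)*(q4*hh)) = (cc*(p1*p2*p3^2)/(q1*q2*q3*q4)) * (tt*(aa*bb*dd^2)/(ee*ff*gg*hh))"
  using assms by (simp add: field_simps power2_eq_square)

lemma RR_rec:
  fixes n :: nat defines "x \<equiv> real n"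
  shows "((24*x+25)*(24*x+7)*(24*x+13)*(24*x+19))/331776 * RR (Suc n)
     = 27*((6*x+5)*(2*x+1)*(6*x+7)^2)/110592 * RR n"
proof -
  define p1 where "p1 = pochhammer (5/6::real) n"
  define p2 where "p2 = pochhammer (1/2::real) n"
  define p3 where "p3 = pochhammer (7/6::real) n"
  define q1 where "q1 = pochhammer (25/24::real) n"
  define q2 where "q2 = pochhammer (7/24::real) n"
  define q3 where "q3 = pochhammer (13/24::real) n"
  define q4 where "q4 = pochhammer (19/24::real) n"
  have nz: "q1 \<noteq> 0" "q2 \<noteq> 0" "q3 \<noteq> 0" "q4 \<noteq> 0"
    unfolding q1_def q2_def q3_def q4_def by (auto intro!: pochhammer_pos[THEN less_imp_neq, THEN not_sym])
  have x0: "x \<ge> 0" unfolding x_def by simp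
  have nz2: "25/24 + x \<noteq> 0" "7/24+x \<noteq> 0" "13/24+x \<noteq> 0" "19/24+x \<noteq> 0" using x0 by linarith+
  have R0: "RR n = (27/256)^n * (p1*p2*p3^2)/(q1*q2*q3*q4)"
    unfolding RR_def p1_def p2_def p3_def q1_def q2_def q3_def q4_def by simp
  have R1: "RR (Suc n) = (27/256)^n*(27/256) * ((p1*(5/6+x))*(p2*(1/2+x))*(p3*(7/6+x))^2)/((q1*(25/24+x))*(q2*(7/24+x))*(q3*(13/24+x))*(q4*(19/24+x)))"
    unfolding RR_def p1_def p2_def p3_def q1_def q2_def q3_def q4_def x_def pochhammer_Suc by simp
  have R2: "RR (Suc n) = RR n * (27/256*((5/6+x)*(1/2+x)*(7/6+x)^2)/((25/24+x)*(7/24+x)*(13/24+x)*(19/24+x)))"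
    unfolding R1 R0 by (rule rr_gen[OF nz nz2])
  have a: "((24*x+25)*(24*x+7)*(24*x+13)*(24*x+19))/331776 = (25/24+x)*(7/24+x)*(13/24+x)*(19/24+x)"
    by (simp add: field_simps)
  have b: "27*((6*x+5)*(2*x+1)*(6*x+7)^2)/110592 = 27/256*((5/6+x)*(1/2+x)*(7/6+x)^2)"
    by (simp add: field_simps power2_eq_square)
  have dd: "(25/24+x)*(7/24+x)*(13/24+x)*(19/24+x) \<noteq> 0" using nz2 by simp
  show ?thesis unfolding R2 a b using dd by simp
qed

theorem main: "FF (real n) sums RR n"
proof (induction n)
  case 0
  have "FF (real 0) sums (sum (FF (real 0)) {..<1})" by (rule FF_sums) simp
  moreover have "sum (FF (real 0)) {..<1} = RR 0" by (simp add: FF_def RR_def)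
  ultimately show ?case by simp
next
  case (Suc n)
  define x where "x = real n"
  have x0: "x \<ge> 0" unfolding x_def by simp
  define A where "A = ((24*x+25)*(24*x+7)*(24*x+13)*(24*x+19))/331776"
  define B where "B = 27*((6*x+5)*(2*x+1)*(6*x+7)^2)/110592"
  have Anz: "A \<noteq> 0" unfolding A_def using x0 by (simp add: add_nonneg_pos)
  have sn: "suminf (FF x) = sum (FF x) {..<3*n+5}"
    unfolding x_def by (rule sums_unique[symmetric], rule FF_sums) simp
  have "suminf (FF x) = RR n" using Suc.IH unfolding x_def by (rule sums_unique[symmetric])
  have s1: "FF (real (Suc n)) sums (sum (FF (x+1)) {..<3*n+5})"
  proof -
    have e: "real (Suc n) = x + 1" unfolding x_def by simp
    have "FF (real (Suc n)) sums (sum (FF (real (Suc n))) {..<3*n+5})" by (rule FF_sums) simp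
    then show ?thesis unfolding e .
  qed
  have "A * sum (FF (x+1)) {..<3*n+5} - B * sum (FF x) {..<3*n+5}
      = (\<Sum>k<3*n+5. GG x (Suc k) - GG x k)"
    unfolding sum_distrib_left sum_subtractf[symmetric] A_def B_def
    by (rule sum.cong[OF refl], rule tele[OF x0])
  also have "\<dots> = GG x (3*n+5) - GG x 0" by (rule sum_lessThan_telescope)
  also have "GG x (3*n+5) = 0" unfolding GG_def x_def using HH_zero[of n "3*n+5"] by simp
  also have "GG x 0 = 0" unfolding GG_def by simp
  finally have rec: "A * sum (FF (x+1)) {..<3*n+5} = B * sum (FF x) {..<3*n+5}" by simp
  have "A * RR (Suc n) = B * RR n" unfolding A_def B_def x_def by (rule RR_rec)
  then have "A * sum (FF (x+1)) {..<3*n+5} = A * RR (Suc n)"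
    using rec sn \<open>suminf (FF x) = RR n\<close> by simp
  then have "sum (FF (x+1)) {..<3*n+5} = RR (Suc n)" using Anz by simp
  then show ?case using s1 by simp
qed


theorem theorem5:
  fixes n :: nat
  shows "(\<lambda>k. (-1) ^ k * (4 * real k + 1) *
            (pochhammer (- 3 * real n) k * pochhammer (- real n + 1/3) k * pochhammer (1/2) k)
            / (fact k * pochhammer (real n + 7/6) k * pochhammer (3 * real n + 3/2) k))
         sums ((3^3 / 2^8) ^ n *
            (pochhammer (5/6) n * pochhammer (1/2) n * (pochhammer (7/6) n)^2)
            / (pochhammer (25/24) n * pochhammer (7/24) n * pochhammer (13/24) n * pochhammer (19/24) n))"
proof -
  have e: "(\<lambda>k. (-1) ^ k * (4 * real k + 1) *
            (pochhammer (- 3 * real n) k * pochhammer (- real n + 1/3) k * pochhammer (1/2) k)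
            / (fact k * pochhammer (real n + 7/6) k * pochhammer (3 * real n + 3/2) k))
         = FF (real n)" by (rule ext) (simp only: FF_def)
  have r: "((3^3 / 2^8) ^ n *
            (pochhammer (5/6) n * pochhammer (1/2) n * (pochhammer (7/6) n)^2)
            / (pochhammer (25/24) n * pochhammer (7/24) n * pochhammer (13/24) n * pochhammer (19/24) n)) = RR n" by (simp only: RR_def)
  show ?thesis unfolding e r by (rule main)
qed

end
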